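(* Let $\mathbb{K}$ be a non-Archimedean valued field and $G$ a compactly generated topological group. Then for every normed $\mathbb{K}[G]$-module $E$, the comparison map $c^2 : H^2_{cb}(G, E) \to H^2_c(G, E)$ is injective.
   Context: A non-Archimedean valued field is a field with an absolute value satisfying the ultrametric inequality. A normed $\mathbb{K}[G]$-module is a $\mathbb{K}$-vector space with an ultrametric norm ($\|x\|=0$ iff $x=0$, $\|x+y\|\le\max$, $\|\alpha x\|=|\alpha|_\mathbb{K}\|x\|$) on which $G$ acts by linear isometries. Bar resolution: $\overline{C}^0(G,E)=\overline{C}^0_b(G,E)=E$, and for $n\ge1$, $\overline{C}^n(G,E)$ is the space of continuous maps $G^n\to E$ and $\overline{C}^n_b(G,E)$ its subspace of bounded ones; coboundary $\delta^0v(g)=g\cdot v-v$ and $\delta^nf(g_1,\dots,g_{n+1})=g_1\cdot f(g_2,\dots,g_{n+1})+\sum_{i=1}^n(-1)^if(g_1,\dots,g_ig_{i+1},\dots,g_{n+1})+(-1)^{n+1}f(g_1,\dots,g_n)$. $H^\bullet_c(G,E)$ and $H^\bullet_{cb}(G,E)$ are the cohomologies of these complexes, and the comparison map $c^\bullet$ is induced by the inclusion $\overline{C}^\bullet_b\subset\overline{C}^\bullet$. *)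

theory Defs
  imports "HOL-Analysis.Analysis" "HOL-Algebra.Generated_Groups"
begin

definition nonarch_absval :: "('k::field \<Rightarrow> real) \<Rightarrow> bool" where
  "nonarch_absval av \<longleftrightarrow>
     (\<forall>x. 0 \<le> av x) \<and> (\<forall>x. av x = 0 \<longleftrightarrow> x = 0) \<and>
     (\<forall>x y. av (x * y) = av x * av y) \<and>
     (\<forall>x y. av (x + y) \<le> max (av x) (av y))"

definition topological_group :: "('g, 'b) monoid_scheme \<Rightarrow> 'g topology \<Rightarrow> bool" where
  "topological_group G T \<longleftrightarrow> group G \<and> topspace T = carrier G \<and>
     continuous_map (prod_topology T T) T (\<lambda>p. fst p \<otimes>\<^bsub>G\<^esub> snd p) \<and>
     continuous_map T T (\<lambda>x. inv\<^bsub>G\<^esub> x)"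

definition compactly_generated :: "('g, 'b) monoid_scheme \<Rightarrow> 'g topology \<Rightarrow> bool" where
  "compactly_generated G T \<longleftrightarrow> (\<exists>K. compactin T K \<and> generate G K = carrier G)"

definition normed_KG_module ::
  "('k::field \<Rightarrow> real) \<Rightarrow> ('g, 'b) monoid_scheme \<Rightarrow> ('k \<Rightarrow> 'e::ab_group_add \<Rightarrow> 'e)
   \<Rightarrow> ('e \<Rightarrow> real) \<Rightarrow> ('g \<Rightarrow> 'e \<Rightarrow> 'e) \<Rightarrow> bool" where
  "normed_KG_module av G sc nm act \<longleftrightarrow>
     vector_space sc \<and>
     (\<forall>x. nm x = 0 \<longleftrightarrow> x = 0) \<and>
     (\<forall>x y. nm (x + y) \<le> max (nm x) (nm y)) \<and>
     (\<forall>a x. nm (sc a x) = av a * nm x) \<and>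
     (\<forall>g\<in>carrier G. \<forall>x y. act g (x + y) = act g x + act g y) \<and>
     (\<forall>g\<in>carrier G. \<forall>a x. act g (sc a x) = sc a (act g x)) \<and>
     (\<forall>g\<in>carrier G. \<forall>x. nm (act g x) = nm x) \<and>
     (\<forall>x. act \<one>\<^bsub>G\<^esub> x = x) \<and>
     (\<forall>g\<in>carrier G. \<forall>h\<in>carrier G. \<forall>x. act (g \<otimes>\<^bsub>G\<^esub> h) x = act g (act h x))"

text \<open>An n-cochain is a map on G^n, represented as a function on
  PiE {..<n} (\<lambda>_. carrier G) (extended by 0 outside). G^0 is a point, so
  0-cochains are identified with elements of E.\<close>

definition norm_topology :: "('e::ab_group_add \<Rightarrow> real) \<Rightarrow> 'e topology" where
  "norm_topology nm = Metric_space.mtopology UNIV (\<lambda>x y. nm (x - y))"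

definition cochains ::
  "('g, 'b) monoid_scheme \<Rightarrow> 'g topology \<Rightarrow> ('e::ab_group_add \<Rightarrow> real) \<Rightarrow> nat
   \<Rightarrow> ((nat \<Rightarrow> 'g) \<Rightarrow> 'e) set" where
  "cochains G T nm n = {f.
     continuous_map (product_topology (\<lambda>_. T) {..<n}) (norm_topology nm) f \<and>
     (\<forall>x. x \<notin> PiE {..<n} (\<lambda>_. carrier G) \<longrightarrow> f x = 0)}"

definition bounded_cochains ::
  "('g, 'b) monoid_scheme \<Rightarrow> 'g topology \<Rightarrow> ('e::ab_group_add \<Rightarrow> real) \<Rightarrow> nat
   \<Rightarrow> ((nat \<Rightarrow> 'g) \<Rightarrow> 'e) set" where
  "bounded_cochains G T nm n = {f \<in> cochains G T nm n.
     \<exists>M. \<forall>x\<in>PiE {..<n} (\<lambda>_. carrier G). nm (f x) \<le> M}"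

definition sgnv :: "nat \<Rightarrow> 'e::ab_group_add \<Rightarrow> 'e" where
  "sgnv i v = (if even i then v else - v)"

text \<open>The coboundary delta^n, with 0-indexed arguments x 0, ..., x n standing for g_1, ..., g_(n+1).\<close>

definition coboundary ::
  "('g, 'b) monoid_scheme \<Rightarrow> ('g \<Rightarrow> 'e::ab_group_add \<Rightarrow> 'e) \<Rightarrow> nat
   \<Rightarrow> ((nat \<Rightarrow> 'g) \<Rightarrow> 'e) \<Rightarrow> ((nat \<Rightarrow> 'g) \<Rightarrow> 'e)" where
  "coboundary G act n f = (\<lambda>x.
     if x \<in> PiE {..<Suc n} (\<lambda>_. carrier G) then
       act (x 0) (f (restrict (\<lambda>j. x (Suc j)) {..<n}))
       + (\<Sum>i\<in>{1..n}. sgnv i (f (restrict (\<lambda>j. if j < i - 1 then x j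
                                      else if j = i - 1 then x (i - 1) \<otimes>\<^bsub>G\<^esub> x i
                                      else x (Suc j)) {..<n})))
       + sgnv (Suc n) (f (restrict x {..<n}))
     else 0)"

definition cocycles where
  "cocycles G act CC n = {f \<in> CC n. coboundary G act n f = (\<lambda>_. 0)}"

definition coboundaries where
  "coboundaries G act CC n = (case n of 0 \<Rightarrow> {\<lambda>_. 0} | Suc m \<Rightarrow> coboundary G act m ` CC m)"

definition cohomology where
  "cohomology G act CC n = cocycles G act CC n //
     {(f, g). f \<in> cocycles G act CC n \<and> g \<in> cocycles G act CC n \<and> (\<lambda>x. f x - g x) \<in> coboundaries G act CC n}"

definition Hc where
  "Hc G T nm act n = cohomology G act (cochains G T nm) n"

definition Hcb where
  "Hcb G T nm act n = cohomology G act (bounded_cochains G T nm) n"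

text \<open>Comparison map c^n : H^n_cb \<rightarrow> H^n_c induced by inclusion: a class is sent to the
  class (in H^n_c) of any of its representatives.\<close>

definition comparison_map where
  "comparison_map G T nm act n X =
     {g \<in> cocycles G act (cochains G T nm) n.
        \<exists>f\<in>X. (\<lambda>x. f x - g x) \<in> coboundaries G act (cochains G T nm) n}"

end

theory Submission
  imports Defs
begin

locale KGM =
  fixes av :: "'k::field \<Rightarrow> real"
    and G :: "('g, 'b) monoid_scheme" and T :: "'g topology"
    and sc :: "'k \<Rightarrow> 'e::ab_group_add \<Rightarrow> 'e" and nm :: "'e \<Rightarrow> real"
    and act :: "'g \<Rightarrow> 'e \<Rightarrow> 'e"
  assumes av: "nonarch_absval av"
    and tg: "topological_group G T"
    and KG: "normed_KG_module av G sc nm act"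
begin

lemma nm0: "nm 0 = 0" using KG unfolding normed_KG_module_def by auto
lemma nm_ultra: "nm (x + y) \<le> max (nm x) (nm y)" using KG unfolding normed_KG_module_def by auto
lemma nm_zero_iff: "nm x = 0 \<longleftrightarrow> x = 0" using KG unfolding normed_KG_module_def by auto

lemma av_m1: "av (-1) = 1"
proof -
  have a: "\<And>x y. av (x*y) = av x * av y" "\<And>x. 0 \<le> av x" "\<And>x. av x = 0 \<longleftrightarrow> x = 0"
    using av unfolding nonarch_absval_def by auto
  have "av 1 = av 1 * av 1" using a(1)[of 1 1] by simp
  moreover have "av 1 \<noteq> 0" using a(3) by simp
  ultimately have 1: "av 1 = 1" by (metis mult_cancel_left1)
  have "av (-1) ^ 2 = 1" using a(1)[of "-1" "-1"] 1 by (simp add: power2_eq_square)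
  then have "av (-1) = 1 \<or> av (-1) = -1" by (simp add: power2_eq_1_iff)
  then show ?thesis using a(2)[of "-1"] by linarith
qed

lemma nm_uminus: "nm (- x) = nm x"
proof -
  have vs: "vector_space sc" using KG unfolding normed_KG_module_def by auto
  have "sc (-1) x = - x"
  proof -
    have m: "module sc" using vs by (simp add: module_iff_vector_space)
    show ?thesis using module.scale_minus_left[OF m, of 1 x] module.scale_one[OF m, of x] by simp
  qed
  moreover have "nm (sc (-1) x) = av (-1) * nm x" using KG unfolding normed_KG_module_def by auto
  ultimately show ?thesis using av_m1 by simp
qed

lemma nm_nonneg: "0 \<le> nm x"
proof -
  have "nm (x + - x) \<le> max (nm x) (nm (-x))" by (rule nm_ultra)
  then show ?thesis using nm0 nm_uminus by simp
qed

lemma nm_diff: "nm (x - y) \<le> max (nm x) (nm y)"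
  using nm_ultra[of x "-y"] nm_uminus[of y] by simp

lemma nm_commute: "nm (x - y) = nm (y - x)"
  using nm_uminus[of "x - y"] by simp

lemma metric: "Metric_space UNIV (\<lambda>x y. nm (x - y))"
proof
  fix x y z :: 'e
  show "0 \<le> nm (x - y)" by (rule nm_nonneg)
  show "nm (x - y) = nm (y - x)" by (rule nm_commute)
  show "(nm (x - y) = 0) = (x = y)" using nm_zero_iff by simp
  have "nm ((x - y) + (y - z)) \<le> max (nm (x - y)) (nm (y - z))" by (rule nm_ultra)
  then show "nm (x - z) \<le> nm (x - y) + nm (y - z)"
    using nm_nonneg[of "x-y"] nm_nonneg[of "y-z"] by simp
qed

lemma act_add: "g \<in> carrier G \<Longrightarrow> act g (x + y) = act g x + act g y"
  using KG unfolding normed_KG_module_def by auto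
lemma act_nm: "g \<in> carrier G \<Longrightarrow> nm (act g x) = nm x"
  using KG unfolding normed_KG_module_def by auto
lemma act_one: "act \<one>\<^bsub>G\<^esub> x = x"
  using KG unfolding normed_KG_module_def by auto
lemma act_diff: "g \<in> carrier G \<Longrightarrow> act g (x - y) = act g x - act g y"
proof -
  assume g: "g \<in> carrier G"
  have "act g (x - y) + act g y = act g x" using act_add[OF g, of "x - y" y] by simp
  then show ?thesis by (simp add: eq_diff_eq)
qed
lemma act_zero: "g \<in> carrier G \<Longrightarrow> act g 0 = 0"
  using act_diff[of g 0 0] by simp


lemma diff_cont:
  assumes h: "continuous_map X (norm_topology nm) h" and h': "continuous_map X (norm_topology nm) h'"
  shows "continuous_map X (norm_topology nm) (\<lambda>x. h x - h' x)"
proof -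
  interpret M: Metric_space UNIV "\<lambda>x y. nm (x - y)" by (rule metric)
  have nt: "norm_topology nm = M.mtopology" by (simp add: norm_topology_def)
  show ?thesis unfolding nt M.continuous_map_to_metric
  proof (intro ballI allI impI)
    fix x e assume x: "x \<in> topspace X" and e: "(0::real) < e"
    obtain U1 where U1: "openin X U1" "x \<in> U1" "\<forall>y\<in>U1. h y \<in> M.mball (h x) e"
      using h x e unfolding nt M.continuous_map_to_metric by blast
    obtain U2 where U2: "openin X U2" "x \<in> U2" "\<forall>y\<in>U2. h' y \<in> M.mball (h' x) e"
      using h' x e unfolding nt M.continuous_map_to_metric by blast
    show "\<exists>U. openin X U \<and> x \<in> U \<and> (\<forall>y\<in>U. h y - h' y \<in> M.mball (h x - h' x) e)"
    proof (intro exI conjI ballI)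
      show "openin X (U1 \<inter> U2)" using U1 U2 by auto
      show "x \<in> U1 \<inter> U2" using U1 U2 by auto
      fix y assume y: "y \<in> U1 \<inter> U2"
      have "nm ((h x - h y) - (h' x - h' y)) \<le> max (nm (h x - h y)) (nm (h' x - h' y))"
        by (rule nm_diff)
      moreover have "nm (h x - h y) < e" "nm (h' x - h' y) < e" using y U1 U2 by auto
      moreover have "(h x - h' x) - (h y - h' y) = (h x - h y) - (h' x - h' y)" by simp
      ultimately have "nm ((h x - h' x) - (h y - h' y)) < e" by (metis max_less_iff_conj order_le_less_trans)
      then show "h y - h' y \<in> M.mball (h x - h' x) e" by simp
    qed
  qed
qed

lemma cochains_diff:
  assumes "a \<in> cochains G T nm n" "b \<in> cochains G T nm n"
  shows "(\<lambda>x. a x - b x) \<in> cochains G T nm n"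
  using assms diff_cont unfolding cochains_def by auto

lemma bounded_cochains_diff:
  assumes "a \<in> bounded_cochains G T nm n" "b \<in> bounded_cochains G T nm n"
  shows "(\<lambda>x. a x - b x) \<in> bounded_cochains G T nm n"
proof -
  obtain A where A: "\<forall>x\<in>PiE {..<n} (\<lambda>_. carrier G). nm (a x) \<le> A"
    using assms(1) unfolding bounded_cochains_def by auto
  obtain B where B: "\<forall>x\<in>PiE {..<n} (\<lambda>_. carrier G). nm (b x) \<le> B"
    using assms(2) unfolding bounded_cochains_def by auto
  have "\<forall>x\<in>PiE {..<n} (\<lambda>_. carrier G). nm (a x - b x) \<le> max A B"
  proof
    fix x assume "x \<in> PiE {..<n} (\<lambda>_. carrier G)"
    then have "nm (a x) \<le> A" "nm (b x) \<le> B" using A B by auto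
    then show "nm (a x - b x) \<le> max A B" using nm_diff[of "a x" "b x"] by linarith
  qed
  moreover have "(\<lambda>x. a x - b x) \<in> cochains G T nm n"
    using assms cochains_diff unfolding bounded_cochains_def by auto
  ultimately show ?thesis unfolding bounded_cochains_def by blast
qed

lemma topspace_nt: "topspace (norm_topology nm) = UNIV"
proof -
  interpret M: Metric_space UNIV "\<lambda>x y. nm (x - y)" by (rule metric)
  show ?thesis by (simp add: norm_topology_def)
qed

lemma zero_bounded: "(\<lambda>_. 0) \<in> bounded_cochains G T nm n"
  unfolding bounded_cochains_def cochains_def using nm0 topspace_nt by auto

lemma sgnv_diff: "sgnv i (a - b) = sgnv i a - sgnv i (b::'e)"
  by (simp add: sgnv_def)

lemma diff3: "(p - q) + (r - s) + (t - u) = (p + r + t) - (q + s + (u::'e))"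
  by (simp add: algebra_simps)

lemma coboundary_diff:
  "coboundary G act n (\<lambda>x. a x - b x) = (\<lambda>x. coboundary G act n a x - coboundary G act n b x)"
proof
  fix x
  show "coboundary G act n (\<lambda>x. a x - b x) x = coboundary G act n a x - coboundary G act n b x"
  proof (cases "x \<in> PiE {..<Suc n} (\<lambda>_. carrier G)")
    case True
    then have x0: "x 0 \<in> carrier G" by auto
    define r0 where "r0 = restrict (\<lambda>j. x (Suc j)) {..<n}"
    define ri where "ri = (\<lambda>i. restrict (\<lambda>j. if j < i - 1 then x j
                                      else if j = i - 1 then x (i - 1) \<otimes>\<^bsub>G\<^esub> x i
                                      else x (Suc j)) {..<n})"
    define rn where "rn = restrict x {..<n}"
    have e: "\<And>c. coboundary G act n c x = act (x 0) (c r0) + (\<Sum>i\<in>{1..n}. sgnv i (c (ri i))) + sgnv (Suc n) (c rn)"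
      unfolding coboundary_def r0_def ri_def rn_def using True by (simp only: if_True)
    have s1: "(\<Sum>i\<in>{1..n}. sgnv i (a (ri i)) - sgnv i (b (ri i))) = (\<Sum>i\<in>{1..n}. sgnv i (a (ri i))) - (\<Sum>i\<in>{1..n}. sgnv i (b (ri i)))"
      by (rule sum_subtractf)
    show ?thesis unfolding e act_diff[OF x0] sgnv_diff s1 by (rule diff3)
  qed (simp add: coboundary_def)
qed

lemma coboundary_zero: "coboundary G act n (\<lambda>_. 0) = (\<lambda>_. 0)"
  using coboundary_diff[where a="\<lambda>_. 0" and b="\<lambda>_. 0" and n=n] by (metis diff_self)

definition Rb where "Rb n = {(f, g). f \<in> cocycles G act (bounded_cochains G T nm) (Suc n) \<and>
   g \<in> cocycles G act (bounded_cochains G T nm) (Suc n) \<and>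
   (\<lambda>x. f x - g x) \<in> coboundaries G act (bounded_cochains G T nm) (Suc n)}"

lemma Bb_diff:
  assumes "u \<in> coboundaries G act (bounded_cochains G T nm) (Suc n)"
    "v \<in> coboundaries G act (bounded_cochains G T nm) (Suc n)"
  shows "(\<lambda>x. u x - v x) \<in> coboundaries G act (bounded_cochains G T nm) (Suc n)"
proof -
  obtain a b where "a \<in> bounded_cochains G T nm n" "b \<in> bounded_cochains G T nm n"
    "u = coboundary G act n a" "v = coboundary G act n b"
    using assms unfolding coboundaries_def by auto
  then show ?thesis unfolding coboundaries_def
    using bounded_cochains_diff coboundary_diff by (simp add: image_iff) metis
qed

lemma Bb_zero: "(\<lambda>_. 0) \<in> coboundaries G act (bounded_cochains G T nm) (Suc n)"
  unfolding coboundaries_def using coboundary_zero zero_bounded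
  by (simp add: image_iff) metis

lemma Rb_equiv: "equiv (cocycles G act (bounded_cochains G T nm) (Suc n)) (Rb n)"
proof (rule equivI)
  show "refl_on (cocycles G act (bounded_cochains G T nm) (Suc n)) (Rb n)"
    unfolding refl_on_def Rb_def using Bb_zero by auto
  show "Rb n \<subseteq> cocycles G act (bounded_cochains G T nm) (Suc n) \<times> cocycles G act (bounded_cochains G T nm) (Suc n)"
    unfolding Rb_def by auto
  show "sym (Rb n)"
  proof (rule symI)
    fix f g assume "(f, g) \<in> Rb n"
    then show "(g, f) \<in> Rb n" unfolding Rb_def
      using Bb_diff[OF Bb_zero, of "\<lambda>x. f x - g x" n] by simp
  qed
  show "trans (Rb n)"
  proof (rule transI)
    fix f g k assume "(f, g) \<in> Rb n" "(g, k) \<in> Rb n"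
    then show "(f, k) \<in> Rb n" unfolding Rb_def
      using Bb_diff[of "\<lambda>x. f x - g x" n "\<lambda>x. (0 - (g x - k x))"]
        Bb_diff[OF Bb_zero, of "\<lambda>x. g x - k x" n] by simp
  qed
qed


lemma nm3: "nm (x + y - z) \<le> max (nm x) (max (nm y) (nm z))"
proof -
  have "nm (x + y - z) \<le> max (nm (x + y)) (nm z)" by (rule nm_diff)
  moreover have "nm (x + y) \<le> max (nm x) (nm y)" by (rule nm_ultra)
  ultimately show ?thesis by linarith
qed

lemma h_bounded:
  assumes cg: "compactly_generated G T"
    and h: "h \<in> cochains G T nm 1"
    and D: "\<forall>x\<in>PiE {..<2} (\<lambda>_. carrier G). nm (coboundary G act 1 h x) \<le> D"
  shows "h \<in> bounded_cochains G T nm 1"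
proof -
  interpret M: Metric_space UNIV "\<lambda>x y. nm (x - y)" by (rule metric)
  have nt: "norm_topology nm = M.mtopology" by (simp add: norm_topology_def)
  have grp: "group G" using tg unfolding topological_group_def by auto
  have tsp: "topspace T = carrier G" using tg unfolding topological_group_def by auto
  obtain K where K: "compactin T K" "generate G K = carrier G"
    using cg unfolding compactly_generated_def by auto
  have KG: "K \<subseteq> carrier G" using compactin_subset_topspace[OF K(1)] tsp by simp
  define e where "e = (\<lambda>k::'g. \<lambda>j::nat. if j = 0 then k else undefined)"
  define pr where "pr = (\<lambda>(a::'g) b. \<lambda>j::nat. if j = 0 then a else if j = 1 then b else undefined)"
  define h1 where "h1 = (\<lambda>k. h (e k))"
  have cob: "coboundary G act 1 h (pr a b) = act a (h1 b) - h1 (a \<otimes>\<^bsub>G\<^esub> b) + h1 a"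
    if ab: "a \<in> carrier G" "b \<in> carrier G" for a b
  proof -
    let ?x = "pr a b"
    have xin: "?x \<in> PiE {..<Suc 1} (\<lambda>_. carrier G)" using ab by (auto simp: pr_def PiE_def extensional_def)
    have c: "coboundary G act 1 h ?x = act (?x 0) (h (restrict (\<lambda>j. ?x (Suc j)) {..<1}))
       + (\<Sum>i\<in>{1..1}. sgnv i (h (restrict (\<lambda>j. if j < i - 1 then ?x j
                                      else if j = i - 1 then ?x (i - 1) \<otimes>\<^bsub>G\<^esub> ?x i
                                      else ?x (Suc j)) {..<1})))
       + sgnv (Suc 1) (h (restrict ?x {..<1}))"
      unfolding coboundary_def using xin by (simp only: if_True)
    have r1: "restrict (\<lambda>j. ?x (Suc j)) {..<1} = e b" by (rule ext) (simp add: pr_def e_def)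
    have r2: "restrict (\<lambda>j. if j < 1 - 1 then ?x j
                                      else if j = 1 - 1 then ?x (1 - 1) \<otimes>\<^bsub>G\<^esub> ?x 1
                                      else ?x (Suc j)) {..<1} = e (a \<otimes>\<^bsub>G\<^esub> b)"
      by (rule ext) (simp add: pr_def e_def)
    have r3: "restrict ?x {..<1} = e a" by (rule ext) (simp add: pr_def e_def)
    have "?x 0 = a" by (simp add: pr_def)
    have s: "(\<Sum>i\<in>{1..1::nat}. f i) = f 1" for f :: "nat \<Rightarrow> 'e" by simp
    show ?thesis unfolding c s r1 r2 r3 \<open>?x 0 = a\<close> by (simp add: h1_def sgnv_def)
  qed
  have cD: "nm (act a (h1 b) - h1 (a \<otimes>\<^bsub>G\<^esub> b) + h1 a) \<le> D"
    if ab: "a \<in> carrier G" "b \<in> carrier G" for a b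
  proof -
    have "pr a b \<in> PiE {..<2} (\<lambda>_. carrier G)" using ab by (auto simp: pr_def PiE_def extensional_def)
    then show ?thesis using D cob[OF ab] by metis
  qed
  have econt: "continuous_map T (product_topology (\<lambda>_. T) {..<1}) e"
    unfolding continuous_map_componentwise by (auto simp: e_def extensional_def)
  have "compactin (norm_topology nm) (h ` (e ` K))"
    using image_compactin[OF image_compactin[OF K(1) econt]] h unfolding cochains_def by auto
  then have "M.mbounded (h ` (e ` K))" unfolding nt by (rule M.compactin_imp_mbounded)
  then obtain c r where cr: "h ` (e ` K) \<subseteq> M.mcball c r" unfolding M.mbounded_def by auto
  define B0 where "B0 = max (nm c) r"
  have B0: "nm (h1 k) \<le> B0" if "k \<in> K" for k
  proof -
    have "h (e k) \<in> M.mcball c r" using cr that by blast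
    then have "nm (c - h1 k) \<le> r" by (simp add: h1_def)
    moreover have "nm (c - (c - h1 k)) \<le> max (nm c) (nm (c - h1 k))" by (rule nm_diff)
    ultimately show ?thesis unfolding B0_def by simp
  qed
  have one_b: "nm (h1 \<one>\<^bsub>G\<^esub>) \<le> D"
    using cD[of "\<one>\<^bsub>G\<^esub>" "\<one>\<^bsub>G\<^esub>"] grp by (simp add: act_one group.is_monoid monoid.one_closed)
  have main: "nm (h1 g) \<le> max D B0" if "g \<in> generate G K" for g
    using that
  proof (induction g rule: generate.induct)
    case one
    then show ?case using one_b by simp
  next
    case (incl k)
    then show ?case using B0 by fastforce
  next
    case (inv k)
    have k: "k \<in> carrier G" using inv KG by auto
    have ik: "inv\<^bsub>G\<^esub> k \<in> carrier G" using k grp by (simp add: group.inv_closed)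
    have kk: "k \<otimes>\<^bsub>G\<^esub> inv\<^bsub>G\<^esub> k = \<one>\<^bsub>G\<^esub>" using k grp by (simp add: group.r_inv)
    define cc where "cc = act k (h1 (inv\<^bsub>G\<^esub> k)) - h1 \<one>\<^bsub>G\<^esub> + h1 k"
    have "nm cc \<le> D" using cD[OF k ik] kk unfolding cc_def by simp
    moreover have "act k (h1 (inv\<^bsub>G\<^esub> k)) = cc + h1 \<one>\<^bsub>G\<^esub> - h1 k" unfolding cc_def by simp
    ultimately have "nm (h1 (inv\<^bsub>G\<^esub> k)) \<le> max (nm cc) (max (nm (h1 \<one>\<^bsub>G\<^esub>)) (nm (h1 k)))"
      using act_nm[OF k] nm3 by metis
    then show ?case using \<open>nm cc \<le> D\<close> one_b B0[OF inv] by linarith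
  next
    case (eng g1 g2)
    have g: "g1 \<in> carrier G" "g2 \<in> carrier G" using eng K(2) by auto
    define cc where "cc = act g1 (h1 g2) - h1 (g1 \<otimes>\<^bsub>G\<^esub> g2) + h1 g1"
    have "nm cc \<le> D" using cD[OF g] unfolding cc_def by simp
    moreover have "h1 (g1 \<otimes>\<^bsub>G\<^esub> g2) = act g1 (h1 g2) + h1 g1 - cc" unfolding cc_def by simp
    ultimately have "nm (h1 (g1 \<otimes>\<^bsub>G\<^esub> g2)) \<le> max (nm (act g1 (h1 g2))) (max (nm (h1 g1)) (nm cc))"
      using nm3 by metis
    then show ?case using \<open>nm cc \<le> D\<close> eng.IH act_nm[OF g(1), of "h1 g2"] by linarith
  qed
  have "\<forall>x\<in>PiE {..<1::nat} (\<lambda>_. carrier G). nm (h x) \<le> max D B0"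
  proof
    fix x assume x: "x \<in> PiE {..<1::nat} (\<lambda>_. carrier G)"
    then have "x = e (x 0)" unfolding e_def by (auto simp: PiE_def extensional_def)
    moreover have "x 0 \<in> generate G K" using x K(2) by auto
    ultimately show "nm (h x) \<le> max D B0" using main unfolding h1_def by metis
  qed
  then show ?thesis using h unfolding bounded_cochains_def by blast
qed


lemma Hcb_Suc: "Hcb G T nm act (Suc n) = cocycles G act (bounded_cochains G T nm) (Suc n) // Rb n"
  unfolding Hcb_def cohomology_def Rb_def by simp

lemma diff_bound:
  assumes "a \<in> bounded_cochains G T nm n" "b \<in> bounded_cochains G T nm n"
  shows "\<exists>D. \<forall>x\<in>PiE {..<n} (\<lambda>_. carrier G). nm (a x - b x) \<le> D"
  using bounded_cochains_diff[OF assms] unfolding bounded_cochains_def by auto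

end

theorem corollary8p8:
  fixes av :: "'k::field \<Rightarrow> real"
    and G :: "('g, 'b) monoid_scheme" and T :: "'g topology"
    and sc :: "'k \<Rightarrow> 'e::ab_group_add \<Rightarrow> 'e" and nm :: "'e \<Rightarrow> real"
    and act :: "'g \<Rightarrow> 'e \<Rightarrow> 'e"
  assumes "nonarch_absval av"
    and "topological_group G T"
    and "compactly_generated G T"
    and "normed_KG_module av G sc nm act"
  shows "inj_on (comparison_map G T nm act 2) (Hcb G T nm act 2)"
proof -
  interpret KGM av G T sc nm act using assms unfolding KGM_def by auto
  let ?Zb = "cocycles G act (bounded_cochains G T nm) (Suc 1)"
  have H: "Hcb G T nm act 2 = ?Zb // Rb 1" using Hcb_Suc[of 1] by (simp add: numeral_2_eq_2)
  have eq: "equiv ?Zb (Rb 1)" by (rule Rb_equiv)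
  have bc: "bounded_cochains G T nm n \<subseteq> cochains G T nm n" for n
    unfolding bounded_cochains_def by auto
  show ?thesis
  proof (rule inj_onI)
    fix X Y
    assume X: "X \<in> Hcb G T nm act 2" and Y: "Y \<in> Hcb G T nm act 2"
      and XY: "comparison_map G T nm act 2 X = comparison_map G T nm act 2 Y"
    have XQ: "X \<in> ?Zb // Rb 1" and YQ: "Y \<in> ?Zb // Rb 1" using X Y H by auto
    obtain f0 where f0: "f0 \<in> ?Zb" "X = Rb 1 `` {f0}" using XQ by (auto elim: quotientE)
    have f0X: "f0 \<in> X" using f0 equiv_class_self[OF eq f0(1)] by simp
    have YZ: "Y \<subseteq> ?Zb" using YQ by (auto elim!: quotientE simp: Rb_def)
    have f0c: "f0 \<in> cocycles G act (cochains G T nm) 2"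
      using f0(1) bc unfolding cocycles_def numeral_2_eq_2 by auto
    have z1: "(\<lambda>_. 0) \<in> cochains G T nm 1" using zero_bounded bc by blast
    have "(\<lambda>x. f0 x - f0 x) \<in> coboundaries G act (cochains G T nm) 2"
      unfolding coboundaries_def numeral_2_eq_2 using coboundary_zero[of 1] z1
      by (simp add: image_iff) (metis One_nat_def)
    then have "f0 \<in> comparison_map G T nm act 2 X"
      unfolding comparison_map_def using f0c f0X by blast
    then have "f0 \<in> comparison_map G T nm act 2 Y" using XY by simp
    then obtain f1 where f1: "f1 \<in> Y" "(\<lambda>x. f1 x - f0 x) \<in> coboundaries G act (cochains G T nm) 2"
      unfolding comparison_map_def by blast
    obtain h where h: "h \<in> cochains G T nm 1" "coboundary G act 1 h = (\<lambda>x. f1 x - f0 x)"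
      using f1(2) unfolding coboundaries_def numeral_2_eq_2 by (auto simp: One_nat_def)
    have f1Z: "f1 \<in> ?Zb" using f1(1) YZ by auto
    have "f1 \<in> bounded_cochains G T nm 2" "f0 \<in> bounded_cochains G T nm 2"
      using f1Z f0(1) unfolding cocycles_def by (auto simp: numeral_2_eq_2)
    then obtain D where D: "\<forall>x\<in>PiE {..<2} (\<lambda>_. carrier G). nm (f1 x - f0 x) \<le> D"
      using diff_bound by blast
    have hb: "h \<in> bounded_cochains G T nm 1"
      using h_bounded[OF assms(3) h(1)] D h(2) by simp
    have "(\<lambda>x. f1 x - f0 x) \<in> coboundaries G act (bounded_cochains G T nm) (Suc 1)"
      unfolding coboundaries_def using hb h(2) by (metis image_eqI nat.simps(5))
    from Bb_diff[OF Bb_zero this]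
    have "(\<lambda>x. f0 x - f1 x) \<in> coboundaries G act (bounded_cochains G T nm) (Suc 1)" by simp
    then have "(f0, f1) \<in> Rb 1" unfolding Rb_def using f0(1) f1Z by simp
    then show "X = Y" using quotient_eq_iff[OF eq XQ YQ f0X f1(1)] by simp
  qed
qed

end
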